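(* Let $d\ge 2$, $n\ge 1$, and let $h_1,\dots,h_m$ be traceless Hermitian operators on $(\mathbb{C}^d)^{\otimes n}$, each supported on 2 qudits with $\|h_i\|_\infty=1$. For every $U\in\mathrm{SU}(d^n)$, $$\mathrm{Cost}(U)\ \ge\ \frac{1}{8\log(d)}\,\mathcal{C}_r(U),$$ with $\log$ base 2.
   Context: Fix the computational basis $\{|\vec z\rangle\}_{\vec z\in[d]^n}$ of $(\mathbb{C}^d)^{\otimes n}$ and let $\Delta(\rho)=\sum_{\vec z}\langle\vec z|\rho|\vec z\rangle|\vec z\rangle\langle\vec z|$ be the completely dephasing channel. The relative entropy of coherence is $C_r(\rho)=S(\Delta(\rho))-S(\rho)$ with $S(\rho)=-\mathrm{Tr}\rho\log\rho$. The cohering power of a unitary $U$ is $\mathcal{C}_r(U)=\max_{\rho}|C_r(U\rho U^\dagger)-C_r(\rho)|$, the maximum over all density operators on $(\mathbb{C}^d)^{\otimes n}$. The circuit cost of $U$ with respect to $h_1,\dots,h_m$ is $\mathrm{Cost}(U)=\inf\int_0^1\sum_{j=1}^m|r_j(s)|ds$ over continuous $r_j:[0,1]\to\mathbb{R}$ with $U=\mathcal{P}\exp(-i\int_0^1\sum_j r_j(s)h_j\,ds)$, $\mathcal{P}$ denoting path ordering. *)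

theory Defs
  imports "HOL-Analysis.Analysis"
begin

text \<open>n qudits: positions of type 'n (CARD('n) = n), local levels of type 'q (CARD('q) = d).
  Computational basis states are configurations z :: 'n \<Rightarrow> 'q; operators on the
  Hilbert space are matrices indexed by configurations.\<close>

type_synonym ('n, 'q) qmat = "complex ^ ('n \<Rightarrow> 'q) ^ ('n \<Rightarrow> 'q)"

definition cadj :: "complex ^ 'k ^ 'k \<Rightarrow> complex ^ 'k ^ 'k" where
  "cadj A = (\<chi> i j. cnj (A $ j $ i))"

definition hermitian_mat :: "complex ^ 'k ^ 'k \<Rightarrow> bool" where
  "hermitian_mat A \<longleftrightarrow> cadj A = A"

definition unitary_mat :: "complex ^ 'k ^ 'k \<Rightarrow> bool" where
  "unitary_mat U \<longleftrightarrow> U ** cadj U = mat 1 \<and> cadj U ** U = mat 1"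

definition special_unitary :: "complex ^ 'k ^ 'k \<Rightarrow> bool" where
  "special_unitary U \<longleftrightarrow> unitary_mat U \<and> det U = 1"

definition cinner :: "complex ^ 'k \<Rightarrow> complex ^ 'k \<Rightarrow> complex" where
  "cinner v w = (\<Sum>i\<in>UNIV. cnj (v $ i) * w $ i)"

definition density_op :: "complex ^ 'k ^ 'k \<Rightarrow> bool" where
  "density_op \<rho> \<longleftrightarrow> hermitian_mat \<rho> \<and> (\<forall>v. 0 \<le> Re (cinner v (\<rho> *v v))) \<and> trace \<rho> = 1"

definition diag_mat :: "('k \<Rightarrow> complex) \<Rightarrow> complex ^ 'k ^ 'k" where
  "diag_mat f = (\<chi> i j. if i = j then f i else 0)"

definition mat_fun :: "(real \<Rightarrow> real) \<Rightarrow> complex ^ 'k ^ 'k \<Rightarrow> complex ^ 'k ^ 'k" where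
  "mat_fun f A = (THE B. \<exists>V lam. unitary_mat V \<and>
      A = V ** diag_mat (\<lambda>k. complex_of_real (lam k)) ** cadj V \<and>
      B = V ** diag_mat (\<lambda>k. complex_of_real (f (lam k))) ** cadj V)"

definition vn_entropy :: "complex ^ 'k ^ 'k \<Rightarrow> real" where
  "vn_entropy \<rho> = - Re (trace (mat_fun (\<lambda>x. x * log 2 x) \<rho>))"

definition dephase :: "complex ^ 'k ^ 'k \<Rightarrow> complex ^ 'k ^ 'k" where
  "dephase \<rho> = (\<chi> i j. if i = j then \<rho> $ i $ i else 0)"

definition rel_ent_coherence :: "complex ^ 'k ^ 'k \<Rightarrow> real" where
  "rel_ent_coherence \<rho> = vn_entropy (dephase \<rho>) - vn_entropy \<rho>"

definition cohering_power :: "complex ^ 'k ^ 'k \<Rightarrow> real" where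
  "cohering_power U = (SUP \<rho>\<in>{\<rho>. density_op \<rho>}.
       \<bar>rel_ent_coherence (U ** \<rho> ** cadj U) - rel_ent_coherence \<rho>\<bar>)"

definition two_local :: "('n::finite, 'q::finite) qmat \<Rightarrow> bool" where
  "two_local h \<longleftrightarrow> (\<exists>i j (g :: 'q \<times> 'q \<Rightarrow> 'q \<times> 'q \<Rightarrow> complex). i \<noteq> j \<and>
     (\<forall>z w. h $ z $ w = (if (\<forall>k. k \<noteq> i \<and> k \<noteq> j \<longrightarrow> z k = w k)
                          then g (z i, z j) (w i, w j) else 0)))"

definition op_norm :: "complex ^ 'k ^ 'k \<Rightarrow> real" where
  "op_norm A = onorm (\<lambda>v. A *v v)"

text \<open>U = P exp(-i \<integral>_0^1 \<Sum>_j r_j(s) h_j ds): the solution V of V' = -i H(s) V, V(0) = I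
  on [0,1] satisfies V(1) = U.\<close>
definition path_ordered_exp_eq ::
  "nat \<Rightarrow> (nat \<Rightarrow> complex ^ 'k ^ 'k) \<Rightarrow> (nat \<Rightarrow> real \<Rightarrow> real) \<Rightarrow> complex ^ 'k ^ 'k \<Rightarrow> bool" where
  "path_ordered_exp_eq m h r U \<longleftrightarrow> (\<exists>V :: real \<Rightarrow> complex ^ 'k ^ 'k.
      V 0 = mat 1 \<and> V 1 = U \<and>
      (\<forall>s\<in>{0..1}. (V has_vector_derivative
          (mat (- \<i>) ** ((\<Sum>j<m. r j s *\<^sub>R h j) ** V s))) (at s within {0..1})))"

definition circuit_cost :: "nat \<Rightarrow> (nat \<Rightarrow> complex ^ 'k ^ 'k) \<Rightarrow> complex ^ 'k ^ 'k \<Rightarrow> ereal" where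
  "circuit_cost m h U = Inf {ereal (integral {0..1} (\<lambda>s. \<Sum>j<m. \<bar>r j s\<bar>)) | r.
      (\<forall>j<m. continuous_on {0..1} (r j)) \<and> path_ordered_exp_eq m h r U}"

end

theory Submission
  imports Defs "HOL-Real_Asymp.Real_Asymp"
begin


lemma cadj_nth[simp]: "cadj A $ i $ j = cnj (A $ j $ i)"
  by (simp add: cadj_def)

lemma cadj_cadj[simp]: "cadj (cadj A) = A"
  by (simp add: cadj_def vec_eq_iff)

lemma cadj_mult: "cadj (A ** B) = cadj B ** cadj A"
  by (simp add: vec_eq_iff matrix_matrix_mult_def mult.commute)

lemma diag_mult_left: "(diag_mat f ** A) $ i $ j = f i * A $ i $ j"
proof -
  have "(\<Sum>k\<in>UNIV. (if i = k then f i else 0) * A $ k $ j) = (\<Sum>k\<in>UNIV. if i = k then f i * A $ k $ j else 0)"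
    by (rule sum.cong) auto
  then show ?thesis by (simp add: matrix_matrix_mult_def diag_mat_def)
qed

lemma diag_mult_right: "(A ** diag_mat f) $ i $ j = A $ i $ j * f j"
proof -
  have "(\<Sum>k\<in>UNIV. A $ i $ k * (if k = j then f k else 0)) = (\<Sum>k\<in>UNIV. if k = j then A $ i $ k * f k else 0)"
    by (rule sum.cong) auto
  then show ?thesis by (simp add: matrix_matrix_mult_def diag_mat_def)
qed

lemma cadj_one[simp]: "cadj (mat 1 :: complex^'k^'k) = mat 1"
  by (simp add: vec_eq_iff mat_def)

lemma unit_simps:
  assumes "unitary_mat W"
  shows "X ** W ** cadj W = X" "X ** cadj W ** W = X" "W ** cadj W = mat 1" "cadj W ** W = mat 1"
    "W ** (cadj W ** X) = X" "cadj W ** (W ** X) = X"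
  using assms unfolding unitary_mat_def
  by (metis matrix_mul_assoc matrix_mul_rid matrix_mul_lid)+

lemma mat_fun_unique:
  fixes V1 V2 :: "complex ^ 'k ^ 'k"
  assumes u1: "unitary_mat V1" and u2: "unitary_mat V2"
  and eq: "V1 ** diag_mat (\<lambda>k. complex_of_real (l1 k)) ** cadj V1 =
           V2 ** diag_mat (\<lambda>k. complex_of_real (l2 k)) ** cadj V2"
  shows "V1 ** diag_mat (\<lambda>k. complex_of_real (f (l1 k))) ** cadj V1 =
         V2 ** diag_mat (\<lambda>k. complex_of_real (f (l2 k))) ** cadj V2"
proof -
  define W where "W = cadj V2 ** V1"
  let ?D1 = "diag_mat (\<lambda>k. complex_of_real (l1 k))"
  let ?D2 = "diag_mat (\<lambda>k. complex_of_real (l2 k))"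
  let ?F1 = "diag_mat (\<lambda>k. complex_of_real (f (l1 k)))"
  let ?F2 = "diag_mat (\<lambda>k. complex_of_real (f (l2 k)))"
  from u1 have a1: "V1 ** cadj V1 = mat 1" "cadj V1 ** V1 = mat 1" by (auto simp: unitary_mat_def)
  from u2 have a2: "V2 ** cadj V2 = mat 1" "cadj V2 ** V2 = mat 1" by (auto simp: unitary_mat_def)
  have "cadj V2 ** (V1 ** ?D1 ** cadj V1) ** V1 = W ** ?D1"
    by (simp add: W_def matrix_mul_assoc unit_simps[OF u1])
  moreover have "cadj V2 ** (V2 ** ?D2 ** cadj V2) ** V1 = ?D2 ** W"
  proof -
    have "cadj V2 ** (V2 ** ?D2 ** cadj V2) ** V1 = (cadj V2 ** V2) ** ?D2 ** (cadj V2 ** V1)"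
      by (simp add: matrix_mul_assoc)
    then show ?thesis by (simp add: a2 W_def)
  qed
  ultimately have comm: "W ** ?D1 = ?D2 ** W" using eq by simp
  have comm2: "W ** ?F1 = ?F2 ** W"
  proof -
    { fix a b
      have "W $ a $ b * complex_of_real (l1 b) = complex_of_real (l2 a) * W $ a $ b"
        using arg_cong[OF comm, of "\<lambda>M. M $ a $ b"] by (simp add: diag_mult_left diag_mult_right)
      then have "W $ a $ b = 0 \<or> l1 b = l2 a" by (auto simp: mult.commute)
      then have "W $ a $ b * complex_of_real (f (l1 b)) = complex_of_real (f (l2 a)) * W $ a $ b"
        by auto }
    then show ?thesis by (simp add: vec_eq_iff diag_mult_left diag_mult_right)
  qed
  have "V2 ** ?F2 ** cadj V2 = V2 ** ?F2 ** (W ** cadj V1)"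
    by (simp add: W_def matrix_mul_assoc unit_simps[OF u1])
  also have "\<dots> = V2 ** (?F2 ** W) ** cadj V1" by (simp add: matrix_mul_assoc)
  also have "\<dots> = V2 ** (W ** ?F1) ** cadj V1" by (simp add: comm2)
  also have "\<dots> = (V2 ** cadj V2) ** V1 ** ?F1 ** cadj V1" by (simp add: W_def matrix_mul_assoc)
  also have "\<dots> = V1 ** ?F1 ** cadj V1" by (simp add: a2 matrix_mul_assoc)
  finally show ?thesis by simp
qed

definition mf_pred :: "(real \<Rightarrow> real) \<Rightarrow> complex ^ 'k ^ 'k \<Rightarrow> complex ^ 'k ^ 'k \<Rightarrow> bool" where
  "mf_pred f A B \<longleftrightarrow> (\<exists>V lam. unitary_mat V \<and>
      A = V ** diag_mat (\<lambda>k. complex_of_real (lam k)) ** cadj V \<and>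
      B = V ** diag_mat (\<lambda>k. complex_of_real (f (lam k))) ** cadj V)"

lemma mat_fun_alt: "mat_fun f A = (THE B. mf_pred f A B)"
  by (simp add: mat_fun_def mf_pred_def)

lemma mf_pred_unique: "mf_pred f A B1 \<Longrightarrow> mf_pred f A B2 \<Longrightarrow> B1 = B2"
  unfolding mf_pred_def using mat_fun_unique by metis

lemma mf_pred_mat_fun: "mf_pred f A B \<Longrightarrow> mat_fun f A = B"
  unfolding mat_fun_alt using mf_pred_unique by blast

lemma unitary_mult: "unitary_mat A \<Longrightarrow> unitary_mat B \<Longrightarrow> unitary_mat (A ** B)"
proof -
  assume a: "unitary_mat A" and b: "unitary_mat B"
  have "A ** B ** cadj (A ** B) = A ** (B ** cadj B) ** cadj A" by (simp add: cadj_mult matrix_mul_assoc)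
  moreover have "cadj (A ** B) ** (A ** B) = cadj B ** (cadj A ** A) ** B" by (simp add: cadj_mult matrix_mul_assoc)
  ultimately show ?thesis using a b by (simp add: unitary_mat_def)
qed

lemma unitary_cadj: "unitary_mat A \<Longrightarrow> unitary_mat (cadj A)"
  by (simp add: unitary_mat_def)

lemma mf_pred_conj:
  assumes W: "unitary_mat W"
  shows "mf_pred f (W ** A ** cadj W) B \<longleftrightarrow> mf_pred f A (cadj W ** B ** W)"
proof
  from W have w: "W ** cadj W = mat 1" "cadj W ** W = mat 1" by (auto simp: unitary_mat_def)
  assume "mf_pred f (W ** A ** cadj W) B"
  then obtain V lam where V: "unitary_mat V" and A: "W ** A ** cadj W = V ** diag_mat (\<lambda>k. complex_of_real (lam k)) ** cadj V"
    and B: "B = V ** diag_mat (\<lambda>k. complex_of_real (f (lam k))) ** cadj V" unfolding mf_pred_def by blast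
  have "A = cadj W ** (W ** A ** cadj W) ** W" by (simp add: matrix_mul_assoc unit_simps[OF W])
  also have "\<dots> = (cadj W ** V) ** diag_mat (\<lambda>k. complex_of_real (lam k)) ** cadj (cadj W ** V)"
    by (simp add: A cadj_mult matrix_mul_assoc)
  finally have "A = (cadj W ** V) ** diag_mat (\<lambda>k. complex_of_real (lam k)) ** cadj (cadj W ** V)" .
  moreover have "cadj W ** B ** W = (cadj W ** V) ** diag_mat (\<lambda>k. complex_of_real (f (lam k))) ** cadj (cadj W ** V)"
    by (simp add: B cadj_mult matrix_mul_assoc)
  moreover have "unitary_mat (cadj W ** V)" by (intro unitary_mult unitary_cadj W V)
  ultimately show "mf_pred f A (cadj W ** B ** W)" unfolding mf_pred_def by blast
next
  from W have w: "W ** cadj W = mat 1" "cadj W ** W = mat 1" by (auto simp: unitary_mat_def)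
  assume "mf_pred f A (cadj W ** B ** W)"
  then obtain V lam where V: "unitary_mat V" and A: "A = V ** diag_mat (\<lambda>k. complex_of_real (lam k)) ** cadj V"
    and B: "cadj W ** B ** W = V ** diag_mat (\<lambda>k. complex_of_real (f (lam k))) ** cadj V" unfolding mf_pred_def by blast
  have "B = W ** (cadj W ** B ** W) ** cadj W" by (simp add: matrix_mul_assoc unit_simps[OF W])
  also have "\<dots> = (W ** V) ** diag_mat (\<lambda>k. complex_of_real (f (lam k))) ** cadj (W ** V)"
    by (simp add: B cadj_mult matrix_mul_assoc)
  finally have "B = (W ** V) ** diag_mat (\<lambda>k. complex_of_real (f (lam k))) ** cadj (W ** V)" .
  moreover have "W ** A ** cadj W = (W ** V) ** diag_mat (\<lambda>k. complex_of_real (lam k)) ** cadj (W ** V)"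
    by (simp add: A cadj_mult matrix_mul_assoc)
  moreover have "unitary_mat (W ** V)" by (intro unitary_mult W V)
  ultimately show "mf_pred f (W ** A ** cadj W) B" unfolding mf_pred_def by blast
qed

lemma trace_mat_fun_conj:
  assumes W: "unitary_mat W"
  shows "trace (mat_fun f (W ** A ** cadj W)) = trace (mat_fun f A)"
proof (cases "\<exists>B. mf_pred f A B")
  case True
  then obtain B where B: "mf_pred f A B" by blast
  from W have w: "W ** cadj W = mat 1" "cadj W ** W = mat 1" by (auto simp: unitary_mat_def)
  have "cadj W ** (W ** B ** cadj W) ** W = B" by (simp add: matrix_mul_assoc unit_simps[OF W])
  with B have "mf_pred f (W ** A ** cadj W) (W ** B ** cadj W)" using mf_pred_conj[OF W] by simp
  then have "mat_fun f (W ** A ** cadj W) = W ** B ** cadj W" by (rule mf_pred_mat_fun)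
  moreover have "trace (W ** B ** cadj W) = trace B"
    by (metis trace_mul_sym matrix_mul_assoc w(2) matrix_mul_lid)
  ultimately show ?thesis using mf_pred_mat_fun[OF B] by simp
next
  case False
  then have "\<not> (\<exists>B. mf_pred f (W ** A ** cadj W) B)" using mf_pred_conj[OF W] by blast
  with False have "(\<lambda>B. mf_pred f (W ** A ** cadj W) B) = (\<lambda>B. mf_pred f A B)" by auto
  then show ?thesis by (simp add: mat_fun_alt)
qed

lemma vn_entropy_conj: "unitary_mat W \<Longrightarrow> vn_entropy (W ** A ** cadj W) = vn_entropy A"
  by (simp add: vn_entropy_def trace_mat_fun_conj)

lemma unitary_one: "unitary_mat (mat 1 :: complex^'k^'k)"
  by (simp add: unitary_mat_def)

lemma vn_entropy_diag:
  "vn_entropy (diag_mat (\<lambda>k. complex_of_real (p k))) = - (\<Sum>k\<in>UNIV. p k * log 2 (p k))"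
proof -
  have "mf_pred (\<lambda>x. x * log 2 x) (diag_mat (\<lambda>k. complex_of_real (p k)))
          (diag_mat (\<lambda>k. complex_of_real (p k * log 2 (p k))))"
    unfolding mf_pred_def
    by (rule exI[of _ "mat 1"], rule exI[of _ p]) (simp add: unitary_one)
  then have "mat_fun (\<lambda>x. x * log 2 x) (diag_mat (\<lambda>k. complex_of_real (p k))) = diag_mat (\<lambda>k. complex_of_real (p k * log 2 (p k)))"
    by (rule mf_pred_mat_fun)
  then show ?thesis by (simp add: vn_entropy_def trace_def diag_mat_def)
qed



definition outer :: "complex ^ 'k \<Rightarrow> complex ^ 'k ^ 'k" where
  "outer b = (\<chi> i j. b $ i * cnj (b $ j))"

definition psd :: "complex ^ 'k ^ 'k \<Rightarrow> bool" where
  "psd A \<longleftrightarrow> (\<forall>v. 0 \<le> Re (cinner v (A *v v)))"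

lemma cinner_diff_left: "cinner (x - y) z = cinner x z - cinner y z"
  by (simp add: cinner_def sum_subtractf ring_distribs)
lemma cinner_diff_right: "cinner x (y - z) = cinner x y - cinner x z"
  by (simp add: cinner_def sum_subtractf ring_distribs)
lemma cinner_add_left: "cinner (x + y) z = cinner x z + cinner y z"
  by (simp add: cinner_def sum.distrib ring_distribs)
lemma cinner_add_right: "cinner x (y + z) = cinner x y + cinner x z"
  by (simp add: cinner_def sum.distrib ring_distribs)
lemma cinner_smult_left: "cinner (t *s x) z = cnj t * cinner x z"
  by (simp add: cinner_def sum_distrib_left mult.assoc)
lemma cinner_smult_right: "cinner x (t *s z) = t * cinner x z"
  by (simp add: cinner_def sum_distrib_left mult_ac)
lemma cinner_axis_left: "cinner (axis a 1) w = w $ a"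
proof -
  have "cinner (axis a 1) w = (\<Sum>i\<in>UNIV. if i = a then w $ i else 0)"
    unfolding cinner_def by (rule sum.cong) (auto simp: axis_def)
  then show ?thesis by simp
qed
lemma cinner_axis_right: "cinner v (axis a 1) = cnj (v $ a)"
proof -
  have "cinner v (axis a 1) = (\<Sum>i\<in>UNIV. if i = a then cnj (v $ i) else 0)"
    unfolding cinner_def by (rule sum.cong) (auto simp: axis_def)
  then show ?thesis by simp
qed
lemma mv_axis: "(A *v axis k 1) $ i = A $ i $ k"
proof -
  have "(A *v axis k 1) $ i = (\<Sum>j\<in>UNIV. if j = k then A $ i $ j else 0)"
    unfolding matrix_vector_mult_def vec_lambda_beta by (rule sum.cong) (auto simp: axis_def)
  then show ?thesis by simp
qed

lemma herm_entry: "hermitian_mat A \<Longrightarrow> A $ j $ i = cnj (A $ i $ j)"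
  unfolding hermitian_mat_def cadj_def by (metis (no_types, lifting) complex_cnj_cnj vec_lambda_beta)

lemma herm_cnj_entry: "hermitian_mat A \<Longrightarrow> cnj (A $ j $ i) = A $ i $ j"
  using herm_entry by (metis complex_cnj_cnj)

lemma herm_cinner_swap:
  assumes "hermitian_mat A"
  shows "cinner x (A *v y) = cnj (cinner y (A *v x))"
proof -
  have "cinner x (A *v y) = (\<Sum>i\<in>UNIV. \<Sum>j\<in>UNIV. cnj (x $ i) * A $ i $ j * y $ j)"
    by (simp add: cinner_def matrix_vector_mult_def sum_distrib_left mult.assoc)
  also have "\<dots> = (\<Sum>j\<in>UNIV. \<Sum>i\<in>UNIV. cnj (x $ i) * A $ i $ j * y $ j)" by (rule sum.swap)
  also have "\<dots> = cnj (cinner y (A *v x))"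
    by (simp add: cinner_def matrix_vector_mult_def sum_distrib_left herm_cnj_entry[OF assms] mult_ac)
  finally show ?thesis .
qed

lemma herm_cinner_real: "hermitian_mat A \<Longrightarrow> Im (cinner x (A *v x)) = 0"
  using herm_cinner_swap[of A x x] by (metis cnj.simps(2) neg_equal_zero)

lemma psd_diag: "psd A \<Longrightarrow> 0 \<le> Re (A $ a $ a)"
  unfolding psd_def using spec[of _ "axis a 1"] by (metis cinner_axis_left mv_axis)

lemma quad_expand:
  "cinner (v - t *s w) (A *v (v - t *s w)) =
     cinner v (A *v v) - t * cinner v (A *v w) - cnj t * cinner w (A *v v) + cnj t * t * cinner w (A *v w)"
  by (simp add: matrix_vector_mult_diff_distrib vector_scalar_commute cinner_diff_left cinner_diff_right
      cinner_smult_left cinner_smult_right algebra_simps)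

lemma psd_zero_row:
  assumes h: "hermitian_mat A" and p: "psd A" and z: "A $ a $ a = 0"
  shows "A $ a $ c = 0"
proof (rule ccontr)
  assume nz: "A $ a $ c \<noteq> 0"
  let ?y = "A $ a $ c"
  define s where "s = (Re (A $ c $ c) + 1) / (2 * (cmod ?y)\<^sup>2)"
  have "(cmod ?y)\<^sup>2 > 0" using nz by simp
  then have s0: "2 * s * (cmod ?y)\<^sup>2 = Re (A $ c $ c) + 1" unfolding s_def by (simp add: field_simps)
  define t where "t = complex_of_real s * ?y"
  have e1: "cinner (axis c 1) (A *v axis c 1) = A $ c $ c" by (simp add: cinner_axis_left mv_axis)
  have e2: "cinner (axis c 1) (A *v axis a 1) = A $ c $ a" by (simp add: cinner_axis_left mv_axis)
  have e3: "cinner (axis a 1) (A *v axis c 1) = ?y" by (simp add: cinner_axis_left mv_axis)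
  have e4: "cinner (axis a 1) (A *v axis a 1) = 0" by (simp add: cinner_axis_left mv_axis z)
  have ca: "A $ c $ a = cnj ?y" by (rule herm_entry[OF h])
  have "0 \<le> Re (cinner (axis c 1 - t *s axis a 1) (A *v (axis c 1 - t *s axis a 1)))"
    using p unfolding psd_def by blast
  also have "\<dots> = Re (A $ c $ c) - Re (t * cnj ?y) - Re (cnj t * ?y)"
    by (simp add: quad_expand e1 e2 e3 e4 ca)
  also have "\<dots> = Re (A $ c $ c) - 2 * s * (cmod ?y)\<^sup>2"
  proof -
    have n: "?y * cnj ?y = complex_of_real ((cmod ?y)\<^sup>2)" by (metis complex_norm_square of_real_power)
    have "t * cnj ?y = complex_of_real (s * (cmod ?y)\<^sup>2)" unfolding t_def
      by (simp only: mult.assoc n of_real_mult)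
    moreover have "cnj t * ?y = complex_of_real (s * (cmod ?y)\<^sup>2)" unfolding t_def
      by (simp add: mult.commute mult.left_commute n)
    ultimately show ?thesis by simp
  qed
  finally show False using s0 by linarith
qed

lemma outer_nth: "outer b $ i $ j = b $ i * cnj (b $ j)"
  by (simp add: outer_def)

lemma outer_herm: "hermitian_mat (outer b)"
  by (simp add: hermitian_mat_def cadj_def outer_def vec_eq_iff mult.commute)

lemma outer_quad: "cinner v (outer b *v v) = cnj (cinner b v) * cinner b v"
  apply (simp add: cinner_def outer_def matrix_vector_mult_def sum_distrib_left sum_distrib_right mult_ac)
  apply (rule sum.swap)
  done

lemma herm_diff:
  assumes a: "hermitian_mat A" and b: "hermitian_mat B" shows "hermitian_mat (A - B)"
proof -
  have "cadj (A - B) = A - B"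
    unfolding cadj_def vec_eq_iff using herm_cnj_entry[OF a] herm_cnj_entry[OF b] by simp
  then show ?thesis by (simp add: hermitian_mat_def)
qed

lemma psd_decomp_aux:
  fixes S :: "'k::finite set"
  assumes "finite S"
  shows "\<And>A. hermitian_mat A \<Longrightarrow> psd A \<Longrightarrow> {a. A $ a $ a \<noteq> 0} \<subseteq> S \<Longrightarrow>
           \<exists>(K::nat) b. A = (\<Sum>k<K. outer (b k))"
  using assms
proof (induction S rule: finite_induct)
  case empty
  then have "A = 0" using psd_zero_row by (auto simp: vec_eq_iff)
  then have "A = (\<Sum>k<(0::nat). outer (undefined k))" by simp
  then show ?case by blast
next
  case (insert a S A)
  show ?case
  proof (cases "A $ a $ a = 0")
    case True
    then have "{a. A $ a $ a \<noteq> 0} \<subseteq> S" using insert.prems by auto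
    then show ?thesis using insert.IH insert.prems by blast
  next
    case False
    define c where "c = Re (A $ a $ a)"
    have Aaa: "A $ a $ a = complex_of_real c"
      using herm_entry[OF insert.prems(1), of a a] unfolding c_def
      by (metis cnj.simps(2) complex_eq_iff neg_equal_zero of_real_0 Re_complex_of_real Im_complex_of_real)
    have c0: "c > 0"
    proof -
      have "c \<noteq> 0" using False Aaa by auto
      then show ?thesis using psd_diag[OF insert.prems(2), of a] unfolding c_def by linarith
    qed
    have sq: "complex_of_real (sqrt c) * complex_of_real (sqrt c) = complex_of_real c"
    proof -
      have "sqrt c * sqrt c = c" using c0 by simp
      then show ?thesis by (metis of_real_mult)
    qed
    define b where "b = (\<chi> i. A $ i $ a / complex_of_real (sqrt c))"
    have ob: "outer b $ i $ j = A $ i $ a * A $ a $ j / complex_of_real c" for i j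
    proof -
      have "outer b $ i $ j = A $ i $ a * cnj (A $ j $ a) / (complex_of_real (sqrt c) * complex_of_real (sqrt c))"
        by (simp add: outer_def b_def)
      also have "complex_of_real (sqrt c) * complex_of_real (sqrt c) = complex_of_real c"
        by (rule sq)
      finally show ?thesis using herm_cnj_entry[OF insert.prems(1), of j a] by simp
    qed
    define B where "B = A - outer b"
    have hB: "hermitian_mat B" using insert.prems(1) outer_herm[of b]
      unfolding B_def by (rule herm_diff)
    have pB: "psd B" unfolding psd_def
    proof
      fix v
      define y where "y = (A *v v) $ a"
      define t where "t = y / complex_of_real c"
      have cb: "cinner b v = y / complex_of_real (sqrt c)"
        by (simp add: cinner_def b_def y_def matrix_vector_mult_def herm_cnj_entry[OF insert.prems(1)] sum_divide_distrib mult.commute)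
      have "cinner v (B *v v) = cinner v (A *v v) - cnj y * y / complex_of_real c"
      proof -
        have "cnj (cinner b v) * cinner b v = cnj y * y / (complex_of_real (sqrt c) * complex_of_real (sqrt c))"
          by (simp add: cb)
        also have "complex_of_real (sqrt c) * complex_of_real (sqrt c) = complex_of_real c"
          by (rule sq)
        finally show ?thesis
          by (simp add: B_def matrix_vector_mult_diff_rdistrib cinner_diff_right outer_quad)
      qed
      also have "\<dots> = cinner (v - t *s axis a 1) (A *v (v - t *s axis a 1))"
      proof -
        have e2: "cinner v (A *v axis a 1) = cnj y"
          using herm_cinner_swap[OF insert.prems(1), of v "axis a 1"] by (simp add: cinner_axis_left y_def)
        have e3: "cinner (axis a 1) (A *v v) = y" by (simp add: cinner_axis_left y_def)
        have e4: "cinner (axis a 1) (A *v axis a 1) = complex_of_real c" by (simp add: cinner_axis_left mv_axis Aaa)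
        show ?thesis using c0 by (simp add: quad_expand e2 e3 e4 t_def field_simps)
      qed
      finally show "0 \<le> Re (cinner v (B *v v))" using insert.prems(2) unfolding psd_def by simp
    qed
    have dB: "{i. B $ i $ i \<noteq> 0} \<subseteq> S"
    proof
      fix i assume "i \<in> {i. B $ i $ i \<noteq> 0}"
      then have nz: "B $ i $ i \<noteq> 0" by simp
      show "i \<in> S"
      proof (rule ccontr)
        assume "i \<notin> S"
        then have "i = a \<or> A $ i $ i = 0" using insert.prems(3) by auto
        then show False
        proof
          assume "i = a" then show False using nz c0 by (simp add: B_def ob Aaa)
        next
          assume "A $ i $ i = 0"
          then have "A $ i $ a = 0" using psd_zero_row insert.prems by blast
          then show False using nz \<open>A $ i $ i = 0\<close> by (simp add: B_def ob)
        qed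
      qed
    qed
    obtain K :: nat and b' where B': "B = (\<Sum>k<K. outer (b' k))" using insert.IH[OF hB pB dB] by blast
    have "A = (\<Sum>k<Suc K. outer ((b'(K := b)) k))"
      using B' by (simp add: B_def diff_eq_eq)
    then show ?thesis by blast
  qed
qed

lemma psd_decomp:
  fixes A :: "complex ^ 'k::finite ^ 'k"
  assumes "hermitian_mat A" "psd A"
  shows "\<exists>(K::nat) b. A = (\<Sum>k<K. outer (b k))"
  using psd_decomp_aux[of UNIV A] assms by auto



definition dscale :: "('k \<Rightarrow> real) \<Rightarrow> complex ^ 'k \<Rightarrow> complex ^ 'k" where
  "dscale L v = (\<chi> z. complex_of_real (L z) * v $ z)"

lemma norm_sq_vec: "(norm (v :: complex ^ 'k)) ^ 2 = (\<Sum>z\<in>UNIV. (cmod (v $ z)) ^ 2)"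
  unfolding norm_vec_def L2_set_def by (simp add: sum_nonneg)

lemma cinner_cs: "cmod (cinner u v) \<le> norm u * norm v"
proof -
  have "cmod (cinner u v) \<le> (\<Sum>i\<in>UNIV. cmod (cnj (u $ i) * v $ i))"
    unfolding cinner_def by (rule norm_sum)
  also have "\<dots> = (\<Sum>i\<in>UNIV. \<bar>cmod (u $ i)\<bar> * \<bar>cmod (v $ i)\<bar>)"
    by (simp add: norm_mult)
  also have "\<dots> \<le> L2_set (\<lambda>i. cmod (u $ i)) UNIV * L2_set (\<lambda>i. cmod (v $ i)) UNIV"
    by (rule L2_set_mult_ineq)
  also have "\<dots> = norm u * norm v" by (simp add: norm_vec_def)
  finally show ?thesis .
qed

lemma norm_dscale_sq: "(norm (dscale L v)) ^ 2 = (\<Sum>z\<in>UNIV. (L z)^2 * (cmod (v $ z)) ^ 2)"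
  unfolding norm_sq_vec by (simp add: dscale_def norm_mult power_mult_distrib)

lemma op_norm_bound: "norm (h *v v) \<le> op_norm h * norm (v :: complex ^ 'k)"
  unfolding op_norm_def by (rule onorm[OF matrix_vector_mul_bounded_linear])

definition restf :: "'n \<Rightarrow> 'n \<Rightarrow> ('n \<Rightarrow> 'q) \<Rightarrow> ('n \<Rightarrow> 'q)" where
  "restf i j z = (\<lambda>k. if k = i \<or> k = j then undefined else z k)"

lemma card_fiber:
  fixes w :: "'n::finite \<Rightarrow> 'q::finite"
  assumes ij: "i \<noteq> j"
  shows "card {z. restf i j z = restf i j w} = CARD('q) * CARD('q)"
proof -
  define \<phi> where "\<phi> = (\<lambda>(a::'q, b::'q). w(i := a, j := b))"
  have inj: "inj \<phi>"
  proof (rule injI)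
    fix x y assume e: "\<phi> x = \<phi> y"
    obtain a b where x: "x = (a, b)" by fastforce
    obtain a' b' where y: "y = (a', b')" by fastforce
    from e have "\<phi> x i = \<phi> y i" "\<phi> x j = \<phi> y j" by auto
    then show "x = y" using ij by (simp add: x y \<phi>_def)
  qed
  have "{z. restf i j z = restf i j w} = range \<phi>"
  proof (intro set_eqI iffI)
    fix z assume "z \<in> {z. restf i j z = restf i j w}"
    then have e: "restf i j z = restf i j w" by simp
    have agree: "z k = w k" if "k \<noteq> i" "k \<noteq> j" for k
      using fun_cong[OF e, of k] that unfolding restf_def by simp
    have "z = \<phi> (z i, z j)" using agree by (auto simp: \<phi>_def)
    then show "z \<in> range \<phi>" by blast
  next
    fix z assume "z \<in> range \<phi>"
    then show "z \<in> {z. restf i j z = restf i j w}"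
      by (auto simp: \<phi>_def restf_def)
  qed
  then show ?thesis using card_image[OF inj] by (simp add: card_cartesian_product)
qed

lemma two_local_rest:
  assumes "i \<noteq> j" and hz: "\<forall>z w. h $ z $ w = (if (\<forall>k. k \<noteq> i \<and> k \<noteq> j \<longrightarrow> z k = w k)
                          then g (z i, z j) (w i, w j) else 0)"
    and "h $ z $ w \<noteq> 0"
  shows "restf i j z = restf i j w"
proof -
  have "\<forall>k. k \<noteq> i \<and> k \<noteq> j \<longrightarrow> z k = w k"
  proof (rule ccontr)
    assume n: "\<not> ?thesis"
    have "h $ z $ w = (if (\<forall>k. k \<noteq> i \<and> k \<noteq> j \<longrightarrow> z k = w k)
                          then g (z i, z j) (w i, w j) else 0)" using hz by blast
    then have "h $ z $ w = 0" using n by simp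
    then show False using assms(3) by simp
  qed
  then show ?thesis unfolding restf_def by auto
qed

lemma xlnx_sq: fixes x :: real assumes "0 < x" "x < 1" shows "x * (ln x)^2 \<le> 1"
proof -
  define y where "y = sqrt x"
  have y0: "0 < y" "y < 1" using assms by (auto simp: y_def)
  have lx: "ln x = 2 * ln y" using assms by (simp add: y_def ln_sqrt)
  have e2: "2 \<le> exp (1::real)" using exp_ge_add_one_self[of 1] by simp
  have "ln ((1 / y) / exp 1) \<le> (1 / y) / exp 1 - 1" using y0 by (intro ln_le_minus_one) auto
  then have a: "- ln y \<le> 1 / (exp 1 * y)" using y0 by (simp add: ln_div ln_mult mult.commute)
  have b: "0 \<le> - ln y" using y0 by simp
  have "(ln x)^2 = 4 * (- ln y)^2" by (simp add: lx power2_eq_square)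
  also have "\<dots> \<le> 4 * (1 / (exp 1 * y))^2" using a b by (intro mult_left_mono power_mono) auto
  also have "\<dots> = (4 / (exp 1)^2) * (1 / x)" using assms by (simp add: y_def power_divide power_mult_distrib)
  also have "\<dots> \<le> 1 * (1 / x)"
  proof (rule mult_right_mono)
    have "4 \<le> (exp (1::real))^2" using e2 power_mono[OF e2, of 2] by simp
    then show "4 / (exp 1)^2 \<le> (1::real)" by simp
  qed (use assms in simp)
  finally show ?thesis using assms by (simp add: field_simps)
qed

lemma term_bound:
  fixes pt Q D :: real
  assumes pt0: "0 < pt" and ptQ: "pt \<le> Q" and D1: "1 \<le> D"
  shows "pt * (ln (D * pt / Q))^2 \<le> pt * (ln D)^2 + Q / D"
proof -
  define x where "x = D * pt / Q"
  have Q0: "0 < Q" using pt0 ptQ by linarith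
  have D0: "0 < D" using D1 by linarith
  have x0: "0 < x" unfolding x_def using pt0 Q0 D0 by simp
  have ptx: "pt = (Q / D) * x" unfolding x_def using Q0 D0 by simp
  have QD: "0 \<le> Q / D" using Q0 D0 by simp
  have pl: "0 \<le> pt * (ln D)^2" using pt0 by simp
  show ?thesis
  proof (cases "x < 1")
    case True
    have "pt * (ln x)^2 = (Q / D) * (x * (ln x)^2)" unfolding ptx by (simp only: mult.assoc)
    also have "\<dots> \<le> (Q / D) * 1" using xlnx_sq[OF x0 True] Q0 D0 by (intro mult_left_mono) auto
    also have "\<dots> = Q / D" by simp
    finally have "pt * (ln x)^2 \<le> Q / D" .
    then show ?thesis using pl unfolding x_def by linarith
  next
    case False
    have "x \<le> D" unfolding x_def using ptQ Q0 D0 by (simp add: divide_le_eq mult_left_mono)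
    then have "ln x \<le> ln D" using x0 by simp
    moreover have "0 \<le> ln x" using False by simp
    ultimately have "(ln x)^2 \<le> (ln D)^2" by (intro power_mono) auto
    then have "pt * (ln x)^2 \<le> pt * (ln D)^2" using pt0 by (intro mult_left_mono) auto
    then show ?thesis using QD unfolding x_def by linarith
  qed
qed



lemma dscale_add: "dscale (\<lambda>z. A z + B z) v = dscale A v + dscale B v"
  by (simp add: dscale_def vec_eq_iff distrib_right)

lemma sum_fiber_const:
  fixes R :: "'a::finite \<Rightarrow> 'b" and f :: "'a \<Rightarrow> real"
  assumes c: "\<And>w. card {z. R z = R w} = N"
  shows "(\<Sum>z\<in>UNIV. \<Sum>w\<in>{w. R w = R z}. f w) = real N * (\<Sum>w\<in>UNIV. f w)"
proof -
  have "(\<Sum>z\<in>UNIV. \<Sum>w\<in>{w. R w = R z}. f w) = (\<Sum>z\<in>UNIV. \<Sum>w\<in>UNIV. if R w = R z then f w else 0)"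
    by (simp add: sum.inter_filter[symmetric])
  also have "\<dots> = (\<Sum>w\<in>UNIV. \<Sum>z\<in>UNIV. if R z = R w then f w else 0)"
    by (subst sum.swap) (simp add: eq_commute)
  also have "\<dots> = (\<Sum>w\<in>UNIV. \<Sum>z\<in>{z. R z = R w}. f w)"
    by (simp add: sum.inter_filter[symmetric])
  also have "\<dots> = (\<Sum>w\<in>UNIV. real N * f w)" using c by simp
  finally show ?thesis by (simp add: sum_distrib_left)
qed

lemma norm_sum_sq_swap:
  "(\<Sum>k<K. (norm (dscale M (\<psi> k :: complex ^ 'k)))^2) = (\<Sum>z\<in>UNIV. (M z)^2 * (\<Sum>k<K. (cmod (\<psi> k $ z))^2))"
  unfolding norm_dscale_sq by (subst sum.swap) (simp add: sum_distrib_left)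

lemma norm_sum_sq_swap1:
  "(\<Sum>k<K. (norm (\<psi> k :: complex ^ 'k))^2) = (\<Sum>z\<in>UNIV. (\<Sum>k<K. (cmod (\<psi> k $ z))^2))"
  unfolding norm_sq_vec by (subst sum.swap) simp

lemma static_bound:
  fixes h :: "('n::finite, 'q::finite) qmat" and \<psi> :: "nat \<Rightarrow> complex ^ ('n \<Rightarrow> 'q)"
    and pt :: "('n \<Rightarrow> 'q) \<Rightarrow> real" and K :: nat
  assumes hh: "hermitian_mat h" and tl: "two_local h" and on: "op_norm h \<le> 1"
    and pos: "\<And>z. 0 < pt z" and ple: "\<And>z. (\<Sum>k<K. (cmod (\<psi> k $ z))^2) \<le> pt z"
  shows "\<bar>\<Sum>k<K. Im (cinner (dscale (\<lambda>z. ln (pt z)) (\<psi> k)) (h *v \<psi> k))\<bar>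
     \<le> sqrt ((\<Sum>z\<in>UNIV. pt z) * ((ln (real CARD('q) * real CARD('q)))^2 + 1))
        * sqrt (\<Sum>z\<in>UNIV. \<Sum>k<K. (cmod (\<psi> k $ z))^2)"
proof -
  obtain i j g where ij: "i \<noteq> j" and hz: "\<forall>z w. h $ z $ w = (if (\<forall>k. k \<noteq> i \<and> k \<noteq> j \<longrightarrow> z k = w k)
                          then g (z i, z j) (w i, w j) else 0)"
    using tl unfolding two_local_def by blast
  define R :: "('n \<Rightarrow> 'q) \<Rightarrow> ('n \<Rightarrow> 'q)" where "R = restf i j"
  define D where "D = real CARD('q) * real CARD('q)"
  have "0 < CARD('q)" by simp
  then have c1: "1 \<le> real CARD('q)" by linarith
  have D1: "1 \<le> D" unfolding D_def using mult_mono[OF c1 c1] by simp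
  define Q where "Q y = (\<Sum>w\<in>{w. R w = y}. pt w)" for y
  define C where "C z = ln (Q (R z) / D)" for z
  define M where "M z = ln (pt z) - C z" for z
  define p where "p z = (\<Sum>k<K. (cmod (\<psi> k $ z))^2)" for z
  have ptQ: "pt z \<le> Q (R z)" for z
    unfolding Q_def by (rule member_le_sum) (auto intro: less_imp_le pos)
  have Q0: "0 < Q (R z)" for z using pos[of z] ptQ[of z] by linarith
  have Mz: "M z = ln (D * pt z / Q (R z))" for z
  proof -
    have a: "0 < pt z" "0 < Q (R z)" "0 < D" using pos[of z] Q0[of z] D1 by auto
    have "ln (Q (R z) / D) = ln (Q (R z)) - ln D" using a by (simp add: ln_div)
    moreover have "ln (D * pt z / Q (R z)) = ln (D * pt z) - ln (Q (R z))" using a by (simp add: ln_div)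
    moreover have "ln (D * pt z) = ln D + ln (pt z)" using a by (simp add: ln_mult)
    ultimately show ?thesis by (simp add: M_def C_def)
  qed
  \<comment> \<open>Step 1: remove the block-constant part\<close>
  have G_herm: "hermitian_mat (\<chi> z w. complex_of_real (C z) * h $ z $ w)"
  proof -
    have "cnj (complex_of_real (C w) * h $ w $ z) = complex_of_real (C z) * h $ z $ w" for z w
    proof (cases "h $ z $ w = 0")
      case True then show ?thesis using herm_cnj_entry[OF hh, of w z] by simp
    next
      case False
      then have "R z = R w" unfolding R_def by (rule two_local_rest[OF ij hz])
      then show ?thesis using herm_cnj_entry[OF hh, of w z] by (simp add: C_def)
    qed
    then show ?thesis by (simp add: hermitian_mat_def cadj_def vec_eq_iff)
  qed
  have step1: "Im (cinner (dscale (\<lambda>z. ln (pt z)) v) (h *v v)) = Im (cinner (dscale M v) (h *v v))" for v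
  proof -
    have "dscale (\<lambda>z. ln (pt z)) v = dscale M v + dscale C v"
      by (simp add: dscale_add[symmetric] M_def)
    moreover have "cinner (dscale C v) (h *v v) = cinner v ((\<chi> z w. complex_of_real (C z) * h $ z $ w) *v v)"
      by (simp add: cinner_def dscale_def matrix_vector_mult_def sum_distrib_left mult_ac)
    ultimately show ?thesis using herm_cinner_real[OF G_herm] by (simp add: cinner_add_left)
  qed
  have "\<bar>\<Sum>k<K. Im (cinner (dscale (\<lambda>z. ln (pt z)) (\<psi> k)) (h *v \<psi> k))\<bar>
      = \<bar>\<Sum>k<K. Im (cinner (dscale M (\<psi> k)) (h *v \<psi> k))\<bar>" by (simp add: step1)
  also have "\<dots> \<le> (\<Sum>k<K. \<bar>Im (cinner (dscale M (\<psi> k)) (h *v \<psi> k))\<bar>)" by (rule sum_abs)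
  also have "\<dots> \<le> (\<Sum>k<K. norm (dscale M (\<psi> k)) * norm (\<psi> k))"
  proof (rule sum_mono)
    fix k
    have "\<bar>Im (cinner (dscale M (\<psi> k)) (h *v \<psi> k))\<bar> \<le> cmod (cinner (dscale M (\<psi> k)) (h *v \<psi> k))"
      by (rule abs_Im_le_cmod)
    also have "\<dots> \<le> norm (dscale M (\<psi> k)) * norm (h *v \<psi> k)" by (rule cinner_cs)
    also have "\<dots> \<le> norm (dscale M (\<psi> k)) * norm (\<psi> k)"
    proof (rule mult_left_mono)
      have "norm (h *v \<psi> k) \<le> op_norm h * norm (\<psi> k)" by (rule op_norm_bound)
      also have "\<dots> \<le> 1 * norm (\<psi> k)" using on by (intro mult_right_mono) auto
      finally show "norm (h *v \<psi> k) \<le> norm (\<psi> k)" by simp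
    qed simp
    finally show "\<bar>Im (cinner (dscale M (\<psi> k)) (h *v \<psi> k))\<bar> \<le> norm (dscale M (\<psi> k)) * norm (\<psi> k)" .
  qed
  also have "\<dots> \<le> L2_set (\<lambda>k. norm (dscale M (\<psi> k))) {..<K} * L2_set (\<lambda>k. norm (\<psi> k)) {..<K}"
    using L2_set_mult_ineq[of "\<lambda>k. norm (dscale M (\<psi> k))" "\<lambda>k. norm (\<psi> k)" "{..<K}"] by simp
  also have "L2_set (\<lambda>k. norm (dscale M (\<psi> k))) {..<K} * L2_set (\<lambda>k. norm (\<psi> k)) {..<K}
     = sqrt (\<Sum>z\<in>UNIV. (M z)^2 * p z) * sqrt (\<Sum>z\<in>UNIV. \<Sum>k<K. (cmod (\<psi> k $ z))^2)"
    unfolding L2_set_def norm_sum_sq_swap norm_sum_sq_swap1 p_def ..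
  finally have X: "\<bar>\<Sum>k<K. Im (cinner (dscale (\<lambda>z. ln (pt z)) (\<psi> k)) (h *v \<psi> k))\<bar>
     \<le> sqrt (\<Sum>z\<in>UNIV. (M z)^2 * p z) * sqrt (\<Sum>z\<in>UNIV. \<Sum>k<K. (cmod (\<psi> k $ z))^2)" .
  have Y: "sqrt (\<Sum>z\<in>UNIV. (M z)^2 * p z) \<le> sqrt ((\<Sum>z\<in>UNIV. pt z) * ((ln D)^2 + 1))"
  proof (rule real_sqrt_le_mono)
    have "(\<Sum>z\<in>UNIV. (M z)^2 * p z) \<le> (\<Sum>z\<in>UNIV. pt z * (M z)^2)"
      by (rule sum_mono) (metis p_def ple mult.commute mult_left_mono zero_le_power2)
    also have "\<dots> \<le> (\<Sum>z\<in>UNIV. pt z * (ln D)^2 + Q (R z) / D)"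
      by (rule sum_mono) (simp add: Mz term_bound pos ptQ D1)
    also have "\<dots> = (ln D)^2 * (\<Sum>z\<in>UNIV. pt z) + (1 / D) * (\<Sum>z\<in>UNIV. Q (R z))"
      by (simp add: sum.distrib sum_distrib_left sum_distrib_right mult_ac sum_divide_distrib)
    also have "(\<Sum>z\<in>UNIV. Q (R z)) = D * (\<Sum>z\<in>UNIV. pt z)"
    proof -
      have c: "card {z. R z = R w} = CARD('q) * CARD('q)" for w
        unfolding R_def by (rule card_fiber[OF ij])
      show ?thesis unfolding Q_def using sum_fiber_const[of R, OF c, of pt] by (simp add: D_def)
    qed
    finally show "(\<Sum>z\<in>UNIV. (M z)^2 * p z) \<le> (\<Sum>z\<in>UNIV. pt z) * ((ln D)^2 + 1)"
      using D1 by (simp add: algebra_simps)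
  qed
  have s0: "0 \<le> sqrt (\<Sum>z\<in>UNIV. \<Sum>k<K. (cmod (\<psi> k $ z))^2)" by (simp add: sum_nonneg)
  show ?thesis using order_trans[OF X mult_right_mono[OF Y s0]] by (simp add: D_def)
qed



lemma bl_mv_left: "bounded_linear (\<lambda>A::complex^'k^'k. A *v b)"
proof -
  have "linear (\<lambda>A::complex^'k^'k. A *v b)"
    by (rule linearI) (simp_all add: vec_eq_iff matrix_vector_mult_def scaleR_sum_right sum.distrib distrib_right)
  then show ?thesis by (simp add: linear_conv_bounded_linear)
qed

lemma has_vd_cmod_sq:
  fixes f :: "real \<Rightarrow> complex"
  assumes "(f has_vector_derivative f') (at s within S)"
  shows "((\<lambda>s. (cmod (f s))^2) has_real_derivative 2 * Re (cnj (f s) * f')) (at s within S)"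
proof -
  have c: "((\<lambda>s. cnj (f s)) has_vector_derivative cnj f') (at s within S)"
    by (rule bounded_linear.has_vector_derivative[OF bounded_linear_cnj assms])
  have "((\<lambda>s. f s * cnj (f s)) has_vector_derivative f s * cnj f' + f' * cnj (f s)) (at s within S)"
    by (rule has_vector_derivative_mult[OF assms c])
  then have "((\<lambda>s. Re (f s * cnj (f s))) has_vector_derivative Re (f s * cnj f' + f' * cnj (f s))) (at s within S)"
    by (rule bounded_linear.has_vector_derivative[OF bounded_linear_Re])
  moreover have "Re (f s * cnj f' + f' * cnj (f s)) = 2 * Re (cnj (f s) * f')"
    by simp
  moreover have "(\<lambda>s. Re (f s * cnj (f s))) = (\<lambda>s. (cmod (f s))^2)"
    by (rule ext) (metis Re_complex_of_real complex_norm_square)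
  ultimately show ?thesis by (simp add: has_real_derivative_iff_has_vector_derivative mult_ac)
qed

lemma sum_mv: "(\<Sum>j\<in>A. f j) *v x = (\<Sum>j\<in>A. f j *v x)"
  by (induction A rule: infinite_finite_induct) (simp_all add: matrix_vector_mult_add_rdistrib)

lemma cinner_zero_right: "cinner u 0 = 0"
  by (simp add: cinner_def)

lemma cinner_sum_right: "cinner u (\<Sum>j\<in>A. w j) = (\<Sum>j\<in>A. cinner u (w j))"
  by (induction A rule: infinite_finite_induct) (simp_all add: cinner_add_right cinner_zero_right)

lemma cinner_scaleR_right: "cinner u (c *\<^sub>R w) = complex_of_real c * cinner u w"
  unfolding cinner_def vector_scaleR_component by (simp add: scaleR_conv_of_real sum_distrib_left mult_ac)

lemma herm_sum_scaleR:
  assumes "\<And>j. j \<in> A \<Longrightarrow> hermitian_mat (h j)"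
  shows "hermitian_mat (\<Sum>j\<in>A. c j *\<^sub>R h j)"
  using assms
proof (induction A rule: infinite_finite_induct)
  case (infinite A) then show ?case by (simp add: hermitian_mat_def cadj_def vec_eq_iff)
next
  case empty then show ?case by (simp add: hermitian_mat_def cadj_def vec_eq_iff)
next
  case (insert x F)
  have hx: "hermitian_mat (h x)" using insert.prems by simp
  have hF: "hermitian_mat (\<Sum>j\<in>F. c j *\<^sub>R h j)" using insert by simp
  have "cadj (c x *\<^sub>R h x + (\<Sum>j\<in>F. c j *\<^sub>R h j)) = c x *\<^sub>R h x + (\<Sum>j\<in>F. c j *\<^sub>R h j)"
    unfolding cadj_def vec_eq_iff vec_lambda_beta vector_add_component vector_scaleR_component
    using herm_cnj_entry[OF hx] herm_cnj_entry[OF hF] by (simp add: scaleR_conv_of_real)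
  then show ?case using insert.hyps by (simp add: hermitian_mat_def)
qed

lemma mat_scalar_mult: "mat c ** A = (\<chi> i j. c * A $ i $ j)"
proof -
  have "(mat c ** A) $ i $ j = c * A $ i $ j" for i j
  proof -
    have "(mat c ** A) $ i $ j = (\<Sum>k\<in>UNIV. if k = i then c * A $ k $ j else 0)"
      unfolding matrix_matrix_mult_def mat_def vec_lambda_beta by (rule sum.cong) auto
    then show ?thesis by simp
  qed
  then show ?thesis by (simp add: vec_eq_iff)
qed

lemma mat_scalar_mv: "(mat c ** A) *v x = c *s (A *v x)"
  by (simp add: mat_scalar_mult vec_eq_iff matrix_vector_mult_def sum_distrib_left mult.assoc)



definition ent :: "real \<Rightarrow> real" where "ent x = - (x * ln x)"

lemma scaleR_mv: "(c *\<^sub>R A) *v v = c *\<^sub>R (A *v (v :: complex ^ 'k))"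
  by (simp add: vec_eq_iff matrix_vector_mult_def scaleR_sum_right)

lemma re_form:
  "(\<Sum>z\<in>UNIV. L z * (2 * Re (cnj (v $ z) * ((- \<i>) * w $ z)))) = 2 * Im (cinner (dscale L v) w)"
proof -
  have "Im (cinner (dscale L v) w) = (\<Sum>z\<in>UNIV. L z * Im (cnj (v $ z) * w $ z))"
    by (simp add: cinner_def dscale_def Im_sum mult.assoc)
  moreover have "Re (cnj (v $ z) * ((- \<i>) * w $ z)) = Im (cnj (v $ z) * w $ z)" for z
    by (simp add: mult.left_commute)
  ultimately show ?thesis by (simp add: sum_distrib_left mult_ac)
qed

lemma dscale_one: "dscale (\<lambda>z. 1) v = v"
  by (simp add: dscale_def vec_eq_iff)

lemma ent_deriv: "0 < x \<Longrightarrow> (ent has_real_derivative (- (ln x + 1))) (at x)"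
  unfolding ent_def by (auto intro!: derivative_eq_intros)

lemma ent_tendsto:
  assumes "0 \<le> x"
  shows "((\<lambda>e. ent (x + e)) \<longlongrightarrow> ent x) (at_right 0)"
proof (cases "x = 0")
  case True
  have "((\<lambda>e::real. -(e * ln e)) \<longlongrightarrow> 0) (at_right 0)" by real_asymp
  then show ?thesis using True by (simp add: ent_def)
next
  case False
  then have x0: "0 < x" using assms by simp
  have "((\<lambda>e. - ((x + e) * ln (x + e))) \<longlongrightarrow> - ((x + 0) * ln (x + 0))) (at_right 0)"
    using x0 by (intro tendsto_intros) auto
  then show ?thesis by (simp add: ent_def)
qed

lemma path_deriv_facts:
  fixes V :: "real \<Rightarrow> ('n::finite, 'q::finite) qmat" and h :: "nat \<Rightarrow> ('n, 'q) qmat"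
    and r :: "nat \<Rightarrow> real \<Rightarrow> real" and b :: "complex ^ ('n \<Rightarrow> 'q)"
  assumes Vd: "(V has_vector_derivative (mat (- \<i>) ** ((\<Sum>j<m. r j s *\<^sub>R h j) ** V s))) (at s within S)"
  shows "((\<lambda>s. (V s *v b) $ z) has_vector_derivative (- \<i>) * ((\<Sum>j<m. r j s *\<^sub>R h j) *v (V s *v b)) $ z) (at s within S)"
proof -
  have "((\<lambda>s. V s *v b) has_vector_derivative (mat (- \<i>) ** ((\<Sum>j<m. r j s *\<^sub>R h j) ** V s)) *v b) (at s within S)"
    by (rule bounded_linear.has_vector_derivative[OF bl_mv_left Vd])
  then have "((\<lambda>s. (V s *v b) $ z) has_vector_derivative ((mat (- \<i>) ** ((\<Sum>j<m. r j s *\<^sub>R h j) ** V s)) *v b) $ z) (at s within S)"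
    by (rule bounded_linear.has_vector_derivative[OF bounded_linear_vec_nth])
  moreover have "(mat (- \<i>) ** ((\<Sum>j<m. r j s *\<^sub>R h j) ** V s)) *v b = (- \<i>) *s ((\<Sum>j<m. r j s *\<^sub>R h j) *v (V s *v b))"
    by (simp add: mat_scalar_mv matrix_vector_mul_assoc)
  ultimately show ?thesis by simp
qed

lemma path_entropy_bound:
  fixes V :: "real \<Rightarrow> ('n::finite, 'q::finite) qmat" and h :: "nat \<Rightarrow> ('n, 'q) qmat"
    and r :: "nat \<Rightarrow> real \<Rightarrow> real" and b :: "nat \<Rightarrow> complex ^ ('n \<Rightarrow> 'q)" and K m :: nat
  assumes hh: "\<And>j. j < m \<Longrightarrow> hermitian_mat (h j)"
    and tl: "\<And>j. j < m \<Longrightarrow> two_local (h j)"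
    and on: "\<And>j. j < m \<Longrightarrow> op_norm (h j) \<le> 1"
    and cont: "\<And>j. j < m \<Longrightarrow> continuous_on {0..1} (r j)"
    and V0: "V 0 = mat 1"
    and Vd: "\<And>s. s \<in> {0..1} \<Longrightarrow> (V has_vector_derivative (mat (- \<i>) ** ((\<Sum>j<m. r j s *\<^sub>R h j) ** V s))) (at s within {0..1})"
    and tr1: "(\<Sum>z\<in>UNIV. \<Sum>k<K. (cmod (b k $ z))^2) = 1"
  shows "\<bar>(\<Sum>z\<in>UNIV. ent (\<Sum>k<K. (cmod ((V 1 *v b k) $ z))^2)) - (\<Sum>z\<in>UNIV. ent (\<Sum>k<K. (cmod ((V 0 *v b k) $ z))^2))\<bar>
     \<le> 2 * sqrt ((ln (real CARD('q) * real CARD('q)))^2 + 1) * integral {0..1} (\<lambda>s. \<Sum>j<m. \<bar>r j s\<bar>)"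
proof -
  define Hm where "Hm s = (\<Sum>j<m. r j s *\<^sub>R h j)" for s
  define \<psi> where "\<psi> k s = V s *v b k" for k s
  define p where "p z s = (\<Sum>k<K. (cmod (\<psi> k s $ z))^2)" for z s
  define p' where "p' z s = (\<Sum>k<K. 2 * Re (cnj (\<psi> k s $ z) * ((- \<i>) * (Hm s *v \<psi> k s) $ z)))" for z s
  define N where "N = real CARD('n \<Rightarrow> 'q)"
  define D where "D = real CARD('q) * real CARD('q)"
  define I where "I = integral {0..1} (\<lambda>s. \<Sum>j<m. \<bar>r j s\<bar>)"
  define C where "C e = sqrt ((1 + e * N) * ((ln D)^2 + 1))" for e
  have Hherm: "hermitian_mat (Hm s)" for s unfolding Hm_def by (rule herm_sum_scaleR) (simp add: hh)
  have p0: "0 \<le> p z s" for z s unfolding p_def by (simp add: sum_nonneg)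
  have dpsi: "((\<lambda>s. \<psi> k s $ z) has_vector_derivative (- \<i>) * (Hm s *v \<psi> k s) $ z) (at s within {0..1})"
    if "s \<in> {0..1}" for k z s
    unfolding \<psi>_def Hm_def by (rule path_deriv_facts[where m=m and r=r and h=h, OF Vd[OF that]])
  have dp: "(p z has_real_derivative p' z s) (at s within {0..1})" if "s \<in> {0..1}" for z s
  proof -
    have "((\<lambda>s. \<Sum>k<K. (cmod (\<psi> k s $ z))^2) has_real_derivative
        (\<Sum>k<K. 2 * Re (cnj (\<psi> k s $ z) * ((- \<i>) * (Hm s *v \<psi> k s) $ z)))) (at s within {0..1})"
      by (rule DERIV_sum) (rule has_vd_cmod_sq[OF dpsi[OF that]])
    moreover have "p z = (\<lambda>s. \<Sum>k<K. (cmod (\<psi> k s $ z))^2)" by (rule ext) (simp add: p_def)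
    ultimately show ?thesis by (simp only: p'_def)
  qed
  have p'_form: "(\<Sum>z\<in>UNIV. L z * p' z s) = 2 * (\<Sum>k<K. Im (cinner (dscale L (\<psi> k s)) (Hm s *v \<psi> k s)))" for L s
  proof -
    have "(\<Sum>z\<in>UNIV. L z * p' z s) = (\<Sum>k<K. \<Sum>z\<in>UNIV. L z * (2 * Re (cnj (\<psi> k s $ z) * ((- \<i>) * (Hm s *v \<psi> k s) $ z))))"
      unfolding p'_def by (simp add: sum_distrib_left) (rule sum.swap)
    also have "\<dots> = (\<Sum>k<K. 2 * Im (cinner (dscale L (\<psi> k s)) (Hm s *v \<psi> k s)))"
      by (rule sum.cong[OF refl], rule re_form)
    finally show ?thesis by (simp add: sum_distrib_left)
  qed
  have sum_p': "(\<Sum>z\<in>UNIV. p' z s) = 0" for s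
    using p'_form[of "\<lambda>z. 1" s] by (simp add: dscale_one herm_cinner_real[OF Hherm])
  have cons: "(\<Sum>z\<in>UNIV. p z s) = 1" if "s \<in> {0..1}" for s
  proof -
    have d0: "((\<lambda>s. \<Sum>z\<in>UNIV. p z s) has_vector_derivative 0) (at x within {0..1})" if "x \<in> {0..1}" for x
    proof -
      have "((\<lambda>s. \<Sum>z\<in>UNIV. p z s) has_real_derivative (\<Sum>z\<in>UNIV. p' z x)) (at x within {0..1})"
        by (rule DERIV_sum) (rule dp[OF that])
      then show ?thesis by (simp add: sum_p' has_real_derivative_iff_has_vector_derivative)
    qed
    obtain c where c: "\<And>x. x \<in> {0..1} \<Longrightarrow> (\<Sum>z\<in>UNIV. p z x) = c"
      using has_vector_derivative_zero_constant[OF convex_real_interval(5) d0] by blast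
    have "(\<Sum>z\<in>UNIV. p z 0) = 1" using tr1 by (simp add: p_def \<psi>_def V0)
    then show ?thesis using c[of 0] c[OF that] by simp
  qed
  have rate: "\<bar>\<Sum>z\<in>UNIV. ln (p z s + e) * p' z s\<bar> \<le> 2 * C e * (\<Sum>j<m. \<bar>r j s\<bar>)"
    if s01: "s \<in> {0..1}" and e0: "0 < e" for s e
  proof -
    define L where "L z = ln (p z s + e)" for z
    define T where "T j = (\<Sum>k<K. Im (cinner (dscale L (\<psi> k s)) (h j *v \<psi> k s)))" for j
    have "(\<Sum>k<K. Im (cinner (dscale L (\<psi> k s)) (Hm s *v \<psi> k s))) = (\<Sum>j<m. r j s * T j)"
    proof -
      have "Im (cinner (dscale L (\<psi> k s)) (Hm s *v \<psi> k s)) = (\<Sum>j<m. r j s * Im (cinner (dscale L (\<psi> k s)) (h j *v \<psi> k s)))" for k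
        by (simp add: Hm_def sum_mv scaleR_mv cinner_sum_right cinner_scaleR_right Im_sum)
      then show ?thesis unfolding T_def by (simp add: sum_distrib_left) (rule sum.swap)
    qed
    then have eq: "(\<Sum>z\<in>UNIV. ln (p z s + e) * p' z s) = 2 * (\<Sum>j<m. r j s * T j)"
      using p'_form[of L s] by (simp add: L_def)
    have Tb: "\<bar>T j\<bar> \<le> C e" if "j < m" for j
    proof -
      have "\<bar>T j\<bar> \<le> sqrt ((\<Sum>z\<in>UNIV. p z s + e) * ((ln D)^2 + 1)) * sqrt (\<Sum>z\<in>UNIV. \<Sum>k<K. (cmod (\<psi> k s $ z))^2)"
        unfolding T_def L_def D_def
        by (rule static_bound[OF hh[OF that] tl[OF that] on[OF that]]) (auto simp: p_def intro!: add_nonneg_pos e0 sum_nonneg less_imp_le[OF e0])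
      also have "(\<Sum>z\<in>UNIV. \<Sum>k<K. (cmod (\<psi> k s $ z))^2) = 1" using cons[OF s01] by (simp add: p_def)
      also have "(\<Sum>z\<in>UNIV. p z s + e) = 1 + e * N" using cons[OF s01] by (simp add: sum.distrib N_def)
      finally show ?thesis by (simp add: C_def)
    qed
    have "\<bar>\<Sum>j<m. r j s * T j\<bar> \<le> (\<Sum>j<m. \<bar>r j s\<bar> * C e)"
      by (rule order_trans[OF sum_abs]) (auto intro!: sum_mono simp: abs_mult intro: mult_left_mono Tb)
    moreover have "(\<Sum>j<m. \<bar>r j s\<bar> * C e) = C e * (\<Sum>j<m. \<bar>r j s\<bar>)"
      by (simp add: sum_distrib_left mult.commute)
    moreover have "\<bar>\<Sum>z\<in>UNIV. ln (p z s + e) * p' z s\<bar> = 2 * \<bar>\<Sum>j<m. r j s * T j\<bar>"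
      unfolding eq by simp
    ultimately show ?thesis by simp
  qed
  define G where "G e s = (\<Sum>z\<in>UNIV. ent (p z s + e))" for e s
  have intB: "((\<lambda>s. \<Sum>j<m. \<bar>r j s\<bar>) has_integral I) {0..1}"
  proof -
    have "continuous_on {0..1} (\<lambda>s. \<Sum>j<m. \<bar>r j s\<bar>)"
      by (intro continuous_intros) (simp add: cont)
    then show ?thesis unfolding I_def by (intro integrable_integral integrable_continuous_interval)
  qed
  have Gbound: "\<bar>G e 1 - G e 0\<bar> \<le> 2 * C e * I" if e0: "0 < e" for e
  proof -
    define g where "g s = (\<Sum>z\<in>UNIV. - (ln (p z s + e) + 1) * p' z s)" for s
    have dG: "(G e has_vector_derivative g s) (at s within {0..1})" if s01: "s \<in> {0..1}" for s
    proof -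
      have "((\<lambda>s. \<Sum>z\<in>UNIV. ent (p z s + e)) has_real_derivative (\<Sum>z\<in>UNIV. - (ln (p z s + e) + 1) * p' z s)) (at s within {0..1})"
      proof (rule DERIV_sum)
        fix z
        have pos: "0 < p z s + e" using p0[of z s] e0 by linarith
        have d1: "((\<lambda>s. p z s + e) has_real_derivative p' z s) (at s within {0..1})"
          using dp[OF s01, of z] by (auto intro!: derivative_eq_intros)
        have "((\<lambda>s. ent (p z s + e)) has_real_derivative - (ln (p z s + e) + 1) * p' z s) (at s within {0..1})"
          using DERIV_chain2[where f=ent and g="\<lambda>s. p z s + e", OF ent_deriv[OF pos] d1] by simp
        then show "((\<lambda>s. ent (p z s + e)) has_real_derivative - (ln (p z s + e) + 1) * p' z s) (at s within {0..1})" .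
      qed
      moreover have "G e = (\<lambda>s. \<Sum>z\<in>UNIV. ent (p z s + e))" by (rule ext) (simp add: G_def)
      ultimately show ?thesis by (simp add: g_def has_real_derivative_iff_has_vector_derivative)
    qed
    have gform: "g s = - (\<Sum>z\<in>UNIV. ln (p z s + e) * p' z s)" for s
    proof -
      have "g s = (\<Sum>z\<in>UNIV. - (ln (p z s + e) * p' z s) + - p' z s)"
        unfolding g_def by (rule sum.cong) (auto simp: algebra_simps)
      also have "\<dots> = - (\<Sum>z\<in>UNIV. ln (p z s + e) * p' z s) - (\<Sum>z\<in>UNIV. p' z s)"
        by (simp only: sum.distrib sum_negf diff_conv_add_uminus)
      finally have "g s = - (\<Sum>z\<in>UNIV. ln (p z s + e) * p' z s) - (\<Sum>z\<in>UNIV. p' z s)" .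
      then show ?thesis by (simp add: sum_p')
    qed
    have gb: "\<bar>g s\<bar> \<le> 2 * C e * (\<Sum>j<m. \<bar>r j s\<bar>)" if "s \<in> {0..1}" for s
      using rate[OF that e0] by (simp add: gform)
    have ftc: "(g has_integral G e 1 - G e 0) {0..1}"
      by (rule fundamental_theorem_of_calculus) (auto intro: dG)
    have iB: "((\<lambda>s. 2 * C e * (\<Sum>j<m. \<bar>r j s\<bar>)) has_integral 2 * C e * I) {0..1}"
      by (rule has_integral_mult_right[OF intB])
    have up: "G e 1 - G e 0 \<le> 2 * C e * I"
      by (rule has_integral_le[OF ftc iB]) (use gb in fastforce)
    have lo: "- (2 * C e * I) \<le> G e 1 - G e 0"
      by (rule has_integral_le[OF has_integral_neg[OF iB] ftc]) (use gb in fastforce)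
    show ?thesis using up lo by linarith
  qed
  have limG: "((\<lambda>e. G e t) \<longlongrightarrow> (\<Sum>z\<in>UNIV. ent (p z t))) (at_right 0)" for t
    unfolding G_def by (intro tendsto_sum ent_tendsto p0)
  have limC: "((\<lambda>e. 2 * C e * I) \<longlongrightarrow> 2 * C 0 * I) (at_right 0)"
    unfolding C_def by (intro tendsto_intros)
  have "\<bar>(\<Sum>z\<in>UNIV. ent (p z 1)) - (\<Sum>z\<in>UNIV. ent (p z 0))\<bar> \<le> 2 * C 0 * I"
  proof (rule tendsto_le[OF trivial_limit_at_right_real limC])
    show "((\<lambda>e. \<bar>G e 1 - G e 0\<bar>) \<longlongrightarrow> \<bar>(\<Sum>z\<in>UNIV. ent (p z 1)) - (\<Sum>z\<in>UNIV. ent (p z 0))\<bar>) (at_right 0)"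
      by (intro tendsto_intros limG)
    show "\<forall>\<^sub>F e in at_right 0. \<bar>G e 1 - G e 0\<bar> \<le> 2 * C e * I"
      using eventually_at_right_less[of "0::real"] by eventually_elim (rule Gbound)
  qed
  then show ?thesis by (simp add: C_def D_def I_def p_def \<psi>_def)
qed


lemma matrix_add_rdistrib': "(A + B) ** C = A ** C + B ** (C :: 'a::semiring_1^'n^'m)"
  by (simp add: vec_eq_iff matrix_matrix_mult_def sum.distrib distrib_right)


lemma conj_outer: "U ** outer b ** cadj U = outer (U *v (b :: complex ^ 'k))"
  by (simp add: vec_eq_iff matrix_matrix_mult_def outer_def matrix_vector_mult_def cadj_def
      sum_distrib_left sum_distrib_right mult_ac)

lemma conj_sum: "U ** (\<Sum>k\<in>A. M k) ** cadj U = (\<Sum>k\<in>A. U ** M k ** cadj U)"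
  by (induction A rule: infinite_finite_induct)
     (simp_all add: matrix_add_ldistrib matrix_add_rdistrib')

lemma dephase_outer_sum:
  "dephase (\<Sum>k<K. outer (c k)) = diag_mat (\<lambda>z. complex_of_real (\<Sum>k<K. (cmod (c k $ z))^2))"
proof -
  have "(\<Sum>k<K. outer (c k)) $ z $ z = complex_of_real (\<Sum>k<K. (cmod (c k $ z))^2)" for z
    by (simp add: sum_component outer_def flip: complex_norm_square)
  then show ?thesis by (simp add: dephase_def diag_mat_def vec_eq_iff)
qed

lemma trace_outer_sum:
  "trace (\<Sum>k<K. outer (c k)) = complex_of_real (\<Sum>z\<in>UNIV. \<Sum>k<K. (cmod (c k $ z))^2)"
  by (simp add: trace_def sum_component outer_def flip: complex_norm_square)

lemma entropy_diag_ent: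
  "vn_entropy (diag_mat (\<lambda>z. complex_of_real (P z))) = (\<Sum>z\<in>UNIV. ent (P z)) / ln 2"
  by (simp add: vn_entropy_diag ent_def log_def sum_divide_distrib sum_negf)

lemma ln2_ge: "1/2 \<le> ln (2::real)"
proof -
  have "ln (1/2::real) \<le> 1/2 - 1" by (rule ln_le_minus_one) simp
  then show ?thesis by (simp add: ln_div)
qed

lemma per_state_bound:
  fixes m :: nat and h :: "nat \<Rightarrow> ('n::finite, 'q::finite) qmat" and U :: "('n, 'q) qmat"
    and r :: "nat \<Rightarrow> real \<Rightarrow> real" and \<rho> :: "('n, 'q) qmat"
  assumes d2: "CARD('q) \<ge> 2"
    and hh: "\<And>j. j < m \<Longrightarrow> hermitian_mat (h j)"
    and tl: "\<And>j. j < m \<Longrightarrow> two_local (h j)"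
    and on: "\<And>j. j < m \<Longrightarrow> op_norm (h j) = 1"
    and uU: "unitary_mat U"
    and cont: "\<And>j. j < m \<Longrightarrow> continuous_on {0..1} (r j)"
    and pe: "path_ordered_exp_eq m h r U"
    and dens: "density_op \<rho>"
  shows "\<bar>rel_ent_coherence (U ** \<rho> ** cadj U) - rel_ent_coherence \<rho>\<bar>
     \<le> 8 * log 2 (real CARD('q)) * integral {0..1} (\<lambda>s. \<Sum>j<m. \<bar>r j s\<bar>)"
proof -
  obtain V where V0: "V 0 = mat 1" and V1: "V 1 = U"
    and Vd: "\<And>s. s \<in> {0..1} \<Longrightarrow> (V has_vector_derivative
          (mat (- \<i>) ** ((\<Sum>j<m. r j s *\<^sub>R h j) ** V s))) (at s within {0..1})"
    using pe unfolding path_ordered_exp_eq_def by blast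
  have hr: "hermitian_mat \<rho>" and pr: "psd \<rho>" and tr: "trace \<rho> = 1"
    using dens unfolding density_op_def psd_def by auto
  obtain K :: nat and b where rho: "\<rho> = (\<Sum>k<K. outer (b k))" using psd_decomp[OF hr pr] by blast
  define P1 where "P1 z = (\<Sum>k<K. (cmod ((V 1 *v b k) $ z))^2)" for z
  define P0 where "P0 z = (\<Sum>k<K. (cmod ((V 0 *v b k) $ z))^2)" for z
  define I where "I = integral {0..1} (\<lambda>s. \<Sum>j<m. \<bar>r j s\<bar>)"
  define l where "l = ln (real CARD('q))"
  have tr1: "(\<Sum>z\<in>UNIV. \<Sum>k<K. (cmod (b k $ z))^2) = 1"
    using tr unfolding rho trace_outer_sum by (metis Re_complex_of_real one_complex.simps(1))
  have P0b: "P0 z = (\<Sum>k<K. (cmod (b k $ z))^2)" for z by (simp add: P0_def V0)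
  have bound: "\<bar>(\<Sum>z\<in>UNIV. ent (P1 z)) - (\<Sum>z\<in>UNIV. ent (P0 z))\<bar>
      \<le> 2 * sqrt ((ln (real CARD('q) * real CARD('q)))^2 + 1) * I"
    unfolding P1_def P0_def I_def
    by (rule path_entropy_bound[OF hh tl _ cont V0 Vd tr1]) (simp_all add: on)
  have sigma: "U ** \<rho> ** cadj U = (\<Sum>k<K. outer (U *v b k))"
    unfolding rho conj_sum conj_outer ..
  have "rel_ent_coherence (U ** \<rho> ** cadj U) - rel_ent_coherence \<rho>
      = vn_entropy (dephase (U ** \<rho> ** cadj U)) - vn_entropy (dephase \<rho>)"
    unfolding rel_ent_coherence_def using vn_entropy_conj[OF uU, of \<rho>] by simp
  also have "\<dots> = ((\<Sum>z\<in>UNIV. ent (P1 z)) - (\<Sum>z\<in>UNIV. ent (P0 z))) / ln 2"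
  proof -
    have s1: "vn_entropy (dephase (U ** \<rho> ** cadj U)) = (\<Sum>z\<in>UNIV. ent (P1 z)) / ln 2"
      unfolding sigma dephase_outer_sum entropy_diag_ent by (simp add: P1_def V1)
    have s0: "vn_entropy (dephase \<rho>) = (\<Sum>z\<in>UNIV. ent (P0 z)) / ln 2"
      unfolding rho dephase_outer_sum entropy_diag_ent by (simp add: P0b)
    show ?thesis unfolding s1 s0 by (simp add: diff_divide_distrib)
  qed
  finally have eq: "rel_ent_coherence (U ** \<rho> ** cadj U) - rel_ent_coherence \<rho>
      = ((\<Sum>z\<in>UNIV. ent (P1 z)) - (\<Sum>z\<in>UNIV. ent (P0 z))) / ln 2" .
  have l0: "1/2 \<le> l"
  proof -
    have "ln 2 \<le> l" unfolding l_def using d2 by simp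
    then show ?thesis using ln2_ge by linarith
  qed
  have I0: "0 \<le> I" unfolding I_def
    by (rule integral_nonneg) (auto intro!: integrable_continuous_interval continuous_intros cont sum_nonneg)
  have lnD: "ln (real CARD('q) * real CARD('q)) = 2 * l"
    unfolding l_def using d2 by (simp add: ln_mult)
  have sq: "sqrt ((2 * l)^2 + 1) \<le> 4 * l"
  proof -
    have l00: "0 \<le> l" using l0 by linarith
    have "1/2 * (1/2) \<le> l * l" by (rule mult_mono[OF l0 l0 l00]) simp
    then have "1/4 \<le> l * l" by simp
    then have "(2 * l)^2 + 1 \<le> (4 * l)^2" by (simp add: power2_eq_square)
    then have "sqrt ((2 * l)^2 + 1) \<le> sqrt ((4 * l)^2)" by (rule real_sqrt_le_mono)
    also have "\<dots> = 4 * l" using l00 by (simp only: real_sqrt_abs)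
    finally show ?thesis .
  qed
  have "\<bar>rel_ent_coherence (U ** \<rho> ** cadj U) - rel_ent_coherence \<rho>\<bar>
      = \<bar>(\<Sum>z\<in>UNIV. ent (P1 z)) - (\<Sum>z\<in>UNIV. ent (P0 z))\<bar> / ln 2"
    by (simp add: eq)
  also have "\<dots> \<le> (2 * sqrt ((2 * l)^2 + 1) * I) / ln 2"
    using bound by (simp add: lnD divide_right_mono)
  also have "\<dots> \<le> (2 * (4 * l) * I) / ln 2"
    using sq I0 by (intro divide_right_mono mult_right_mono) auto
  also have "\<dots> = 8 * log 2 (real CARD('q)) * I"
    by (simp add: l_def log_def)
  finally show ?thesis unfolding I_def .
qed

theorem mainTheorem3:
  fixes m :: nat
    and h :: "nat \<Rightarrow> ('n::finite, 'q::finite) qmat"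
    and U :: "('n, 'q) qmat"
  assumes "CARD('q) \<ge> 2"
    and "\<And>j. j < m \<Longrightarrow> hermitian_mat (h j)"
    and "\<And>j. j < m \<Longrightarrow> trace (h j) = 0"
    and "\<And>j. j < m \<Longrightarrow> two_local (h j)"
    and "\<And>j. j < m \<Longrightarrow> op_norm (h j) = 1"
    and "special_unitary U"
  shows "circuit_cost m h U \<ge> ereal (cohering_power U / (8 * log 2 (real CARD('q))))"
proof -
  have uU: "unitary_mat U" using assms(6) by (simp add: special_unitary_def)
  have Lg: "0 < log 2 (real CARD('q))" using assms(1) by simp
  define e0 :: "complex ^ ('n \<Rightarrow> 'q)" where "e0 = axis undefined 1"
  have dens0: "density_op (outer e0)"
    unfolding density_op_def
  proof (intro conjI allI)
    show "hermitian_mat (outer e0)" by (rule outer_herm)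
    fix v
    show "0 \<le> Re (cinner v (outer e0 *v v))"
      unfolding outer_quad by (simp add: complex_mult_cnj[symmetric] mult.commute) 
  next
    show "trace (outer e0) = 1"
    proof -
      have "trace (outer e0) = (\<Sum>i\<in>UNIV. if i = (undefined :: 'n \<Rightarrow> 'q) then (1::complex) else 0)"
        unfolding trace_def outer_def e0_def axis_def vec_lambda_beta by (rule sum.cong) auto
      then show ?thesis by simp
    qed
  qed
  show ?thesis
    unfolding circuit_cost_def
  proof (rule Inf_greatest, clarify)
    fix r
    assume cont: "\<forall>j<m. continuous_on {0..1} (r j)" and pe: "path_ordered_exp_eq m h r U"
    define I where "I = integral {0..1} (\<lambda>s. \<Sum>j<m. \<bar>r j s\<bar>)"
    have "cohering_power U \<le> 8 * log 2 (real CARD('q)) * I"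
      unfolding cohering_power_def I_def
    proof (rule cSUP_least)
      show "{\<rho> :: ('n, 'q) qmat. density_op \<rho>} \<noteq> {}" using dens0 by blast
      fix \<rho> :: "('n, 'q) qmat" assume "\<rho> \<in> {\<rho>. density_op \<rho>}"
      then show "\<bar>rel_ent_coherence (U ** \<rho> ** cadj U) - rel_ent_coherence \<rho>\<bar>
          \<le> 8 * log 2 (real CARD('q)) * integral {0..1} (\<lambda>s. \<Sum>j<m. \<bar>r j s\<bar>)"
        using per_state_bound[OF assms(1,2,4,5) uU _ pe] cont by auto
    qed
    then have "cohering_power U / (8 * log 2 (real CARD('q))) \<le> I"
      using Lg by (simp add: divide_le_eq mult.commute)
    then show "ereal (cohering_power U / (8 * log 2 (real CARD('q)))) \<le> ereal (integral {0..1} (\<lambda>s. \<Sum>j<m. \<bar>r j s\<bar>))"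
      unfolding I_def[symmetric] by (simp only: ereal_less_eq)
  qed
qed


end
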